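(* Let $n\ge 2$, let $\mathcal{V}=[n]$, and let $\mathcal{H}(\mathcal{V},\mathcal{E})$ be a connected comparison hypergraph whose hyperedges $e\in\mathcal{E}$ are subsets of $\mathcal{V}$ with $|e|\ge 2$. Let $\mathcal{X}\subset\mathbb{R}^d$ be compact. Assume: (i) the covariates $X_{e,j}\in\mathcal{X}$, $e\in\mathcal{E}$, $j\in e$, are independent and identically distributed with an absolutely continuous distribution $\rho_{\mathcal{X}}$ whose density is bounded away from zero and infinity on $\mathcal{X}$; (ii) every $f\in\mathcal{F}$ is a continuous function $\mathcal{X}\to\mathbb{R}$; (iii) every $f\in\mathcal{F}$ satisfies $\mathbb{E}_{X\sim\rho_{\mathcal{X}}}[f(X)]=0$. For $(\boldsymbol{u},f)\in\mathbb{U}^n\times\mathcal{F}$, where $\mathbb{U}^n=\{\boldsymbol{u}\in\mathbb{R}^n:\mathbf{1}^\top\boldsymbol{u}=0\}$, and a hyperedge $e$ with $m=|e|$, define $s_{e,j}(\boldsymbol{u},f)=u_j+f(X_{e,j})$ and, for a permutation $\pi=(\pi(1),\dots,\pi(m))$ of $e$ (with $\pi(i)$ the object ranked $i$-th), $$\mathbb{P}_{\boldsymbol{u},f}(\pi\mid\{X_{e,j}\}_{j\in e},e)=\prod_{j\in[m]}\frac{\exp(s_{e,\pi(j)}(\boldsymbol{u},f))}{\sum_{t=j}^m\exp(s_{e,\pi(t)}(\boldsymbol{u},f))}.$$ Let $\mathcal{Z}(e)=\mathsf{Perm}(e)\times\mathcal{X}^{|e|}$ and, for $z=(\pi,\{X_{e,j}\}_{j\in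 e})\in\mathcal{Z}(e)$, let $g_e(z;\boldsymbol{u},f)=\prod_{j\in e}\rho_{\mathcal{X}}(X_{e,j})\cdot\mathbb{P}_{\boldsymbol{u},f}(\pi\mid\{X_{e,j}\}_{j\in e},e)$. Then the model is identifiable: for any $(\boldsymbol{u},f)\neq(\boldsymbol{u}',f')$ in $\mathbb{U}^n\times\mathcal{F}$ there exist $e\in\mathcal{E}$ and a set $Z\subseteq\mathcal{Z}(e)$ of positive measure such that $\int_Z g_e(z;\boldsymbol{u},f)\,dz\neq\int_Z g_e(z;\boldsymbol{u}',f')\,dz$.
   Context: $\mathsf{Perm}(e)$ is the set of all bijections $[|e|]\to e$; here $\rho_{\mathcal{X}}$ also denotes the density of the covariate distribution. The measure on $\mathcal{Z}(e)$ is the product of counting measure on $\mathsf{Perm}(e)$ and Lebesgue measure on $\mathcal{X}^{|e|}$. *)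

theory Defs
  imports "HOL-Analysis.Analysis" "HOL-Combinatorics.Multiset_Permutations"
begin

definition hyper_adj :: "'v set set \<Rightarrow> ('v \<times> 'v) set" where
  "hyper_adj E = {(a, b). \<exists>e\<in>E. a \<in> e \<and> b \<in> e}"

definition comparison_hypergraph :: "'v set \<Rightarrow> 'v set set \<Rightarrow> bool" where
  "comparison_hypergraph V E \<longleftrightarrow> (\<forall>e\<in>E. e \<subseteq> V \<and> 2 \<le> card e)"

definition hyper_connected :: "'v set \<Rightarrow> 'v set set \<Rightarrow> bool" where
  "hyper_connected V E \<longleftrightarrow> (\<forall>i\<in>V. \<forall>j\<in>V. (i, j) \<in> (hyper_adj E)\<^sup>*)"

definition Ucent :: "nat \<Rightarrow> (nat \<Rightarrow> real) set" where
  "Ucent n = {u. (\<Sum>i\<in>{1..n}. u i) = 0 \<and> (\<forall>i. i \<notin> {1..n} \<longrightarrow> u i = 0)}"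

text \<open>Plackett--Luce probability of the ranking \<open>\<pi>\<close> (a list; \<open>\<pi> ! 0\<close> is ranked first)
  given covariates \<open>x j\<close> for \<open>j \<in> e\<close>; score \<open>s_j = u_j + f (x j)\<close>.\<close>
definition PL_prob :: "(nat \<Rightarrow> real) \<Rightarrow> ('a \<Rightarrow> real) \<Rightarrow> nat list \<Rightarrow> (nat \<Rightarrow> 'a) \<Rightarrow> real" where
  "PL_prob u f \<pi> x =
     (let m = length \<pi>; s = (\<lambda>j. u j + f (x j)) in
      \<Prod>i<m. exp (s (\<pi> ! i)) / (\<Sum>t\<in>{i..<m}. exp (s (\<pi> ! t))))"

definition Z_measure :: "nat set \<Rightarrow> (nat list \<times> (nat \<Rightarrow> 'a::euclidean_space)) measure" where
  "Z_measure e = count_space (permutations_of_set e) \<Otimes>\<^sub>M PiM e (\<lambda>_. lborel)"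

definition Z_space :: "nat set \<Rightarrow> 'a set \<Rightarrow> (nat list \<times> (nat \<Rightarrow> 'a)) set" where
  "Z_space e X = permutations_of_set e \<times> (e \<rightarrow>\<^sub>E X)"

definition g_dens :: "('a \<Rightarrow> real) \<Rightarrow> nat set \<Rightarrow> (nat \<Rightarrow> real) \<Rightarrow> ('a \<Rightarrow> real)
    \<Rightarrow> nat list \<times> (nat \<Rightarrow> 'a) \<Rightarrow> real" where
  "g_dens rho e u f z = (\<Prod>j\<in>e. rho (snd z j)) * PL_prob u f (fst z) (snd z)"

end

theory Submission
  imports Defs
begin


lemma PL_nil: "PL_prob u f [] x = 1"
  by (simp add: PL_prob_def)

lemma sum_nth_shift: "(\<Sum>t\<in>{Suc i..<Suc m}. g ((y # ys) ! t)) = (\<Sum>t\<in>{i..<m}. g (ys ! t))"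
  by (simp only: sum.shift_bounds_Suc_ivl nth_Cons_Suc)

lemma sum_nth_list: "(\<Sum>t\<in>{0..<length l}. g (l ! t)) = (\<Sum>z\<leftarrow>l. g z)"
  by (simp add: sum_list_sum_nth)

lemma PL_Cons: "PL_prob u f (y # ys) x =
   exp (u y + f (x y)) / (\<Sum>z\<leftarrow>(y#ys). exp (u z + f (x z))) * PL_prob u f ys x"
proof -
  have "PL_prob u f (y # ys) x = (\<Prod>i<Suc (length ys). exp (u ((y#ys) ! i) + f (x ((y#ys) ! i))) /
        (\<Sum>t\<in>{i..<Suc (length ys)}. exp (u ((y#ys) ! t) + f (x ((y#ys) ! t)))))"
    by (simp add: PL_prob_def Let_def)
  also have "\<dots> = exp (u y + f (x y)) / (\<Sum>t\<in>{0..<length (y#ys)}. exp (u ((y#ys) ! t) + f (x ((y#ys) ! t))))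
       * (\<Prod>i<length ys. exp (u (ys ! i) + f (x (ys ! i))) /
        (\<Sum>t\<in>{Suc i..<Suc (length ys)}. exp (u ((y#ys) ! t) + f (x ((y#ys) ! t)))))"
    by (subst prod.lessThan_Suc_shift) simp
  also have "\<dots> = exp (u y + f (x y)) / (\<Sum>z\<leftarrow>(y#ys). exp (u z + f (x z))) * PL_prob u f ys x"
    by (simp only: sum_nth_shift[where g="\<lambda>z. exp (u z + f (x z))"]
          sum_nth_list[where g="\<lambda>z. exp (u z + f (x z))"]) (simp add: PL_prob_def Let_def)
  finally show ?thesis .
qed

lemma PL_pos: "PL_prob u f l x > 0"
proof (induction l)
  case Nil then show ?case by (simp add: PL_nil)
next
  case (Cons y ys)
  have "0 \<le> (\<Sum>z\<leftarrow>ys. exp (u z + f (x z)))" by (rule sum_list_nonneg) auto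
  then have "0 < exp (u y + f (x y)) + (\<Sum>z\<leftarrow>ys. exp (u z + f (x z)))"
    by (smt (verit) exp_gt_zero)
  then show ?case using Cons by (simp add: PL_Cons)
qed

lemma PL_swap: "PL_prob u f (ys @ [a, b]) x * exp (u b + f (x b)) =
                PL_prob u f (ys @ [b, a]) x * exp (u a + f (x a))"
proof (induction ys)
  case Nil
  have "0 < exp (u a + f (x a)) + exp (u b + f (x b))" by (smt (verit) exp_gt_zero)
  then show ?case by (simp add: PL_Cons PL_nil field_simps)
next
  case (Cons y ys)
  have "(\<Sum>z\<leftarrow>(y # ys @ [a, b]). exp (u z + f (x z))) = (\<Sum>z\<leftarrow>(y # ys @ [b, a]). exp (u z + f (x z)))"
    by simp
  then show ?case using Cons
    by (simp only: append_Cons PL_Cons) (metis (no_types, lifting) mult.assoc)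
qed

lemma PL_cong: "(\<And>j. j \<in> set \<pi> \<Longrightarrow> f (x j) = f' (x j)) \<Longrightarrow> PL_prob u f \<pi> x = PL_prob u f' \<pi> x"
  unfolding PL_prob_def Let_def
  by (intro prod.cong sum.cong arg_cong2[where f="(/)"] refl) (auto)



lemma sf_lborel: "product_sigma_finite (\<lambda>_::nat. (lborel :: 'a::euclidean_space measure))"
  by unfold_locales

lemma space_Z: "space (Z_measure e) = permutations_of_set e \<times> (e \<rightarrow>\<^sub>E UNIV)"
  by (simp add: Z_measure_def space_pair_measure space_PiM)

lemma g_meas:
  fixes ft :: "'a::euclidean_space \<Rightarrow> real"
  assumes [measurable]: "ft \<in> borel_measurable borel" "rho \<in> borel_measurable borel"
  and fe: "finite e"
  shows "(\<lambda>z. g_dens rho e u ft z) \<in> borel_measurable (Z_measure e)"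
  unfolding Z_measure_def
proof (rule measurable_pair_measure_countable1)
  show "countable (permutations_of_set e)" using fe by (simp add: countable_finite)
  fix \<pi> assume \<pi>: "\<pi> \<in> permutations_of_set e"
  then have se: "set \<pi> = e" by (simp add: permutations_of_set_def)
  have [measurable]: "i < length \<pi> \<Longrightarrow> (\<lambda>y. y (\<pi> ! i)) \<in> borel_measurable (PiM e (\<lambda>_. lborel))" for i
    using se nth_mem[of i \<pi>] by (intro measurable_component_singleton[THEN measurable_compose]) auto
  show "(\<lambda>y. g_dens rho e u ft (\<pi>, y)) \<in> borel_measurable (PiM e (\<lambda>_. lborel))"
    unfolding g_dens_def PL_prob_def Let_def fst_conv snd_conv
    by (intro borel_measurable_times borel_measurable_prod borel_measurable_divide borel_measurable_sum
        borel_measurable_exp borel_measurable_add)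
       (auto intro: measurable_compose[OF _ assms(1)] measurable_compose[OF _ assms(2)]
             measurable_component_singleton[THEN measurable_compose])
qed



lemma prod_two:
  assumes "finite e" "a \<in> e" "b \<in> e" "a \<noteq> b"
  shows "(\<Prod>j\<in>e. (if j = a then p else if j = b then q else r) (y j)) =
         p (y a) * q (y b) * (\<Prod>j\<in>e-{a,b}. r (y j))"
proof -
  have e: "e = insert a (insert b (e - {a,b}))" using assms by auto
  let ?F = "\<lambda>j. (if j = a then p else if j = b then q else r) (y j)"
  have "prod ?F e = ?F a * (?F b * prod ?F (e - {a,b}))"
    using assms by (subst e) (simp add: prod.insert)
  also have "prod ?F (e - {a,b}) = (\<Prod>j\<in>e-{a,b}. r (y j))"
    by (rule prod.cong) auto
  finally show ?thesis using assms by (simp add: mult.assoc)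
qed

lemma int_two:
  fixes p q r :: "'a::euclidean_space \<Rightarrow> real" and e :: "nat set"
  assumes "finite e" "a \<in> e" "b \<in> e" "a \<noteq> b"
    and ip: "integrable lborel p" and iq: "integrable lborel q" and ir: "integrable lborel r"
    and r1: "integral\<^sup>L lborel r = 1"
  shows "(\<integral>y. p (y a) * q (y b) * (\<Prod>j\<in>e-{a,b}. r (y j)) \<partial>PiM e (\<lambda>_. lborel)) =
         integral\<^sup>L lborel p * integral\<^sup>L lborel q"
proof -
  interpret product_sigma_finite "\<lambda>_::nat. (lborel :: 'a measure)" by (rule sf_lborel)
  have "(\<integral>y. p (y a) * q (y b) * (\<Prod>j\<in>e-{a,b}. r (y j)) \<partial>PiM e (\<lambda>_. lborel)) =
        (\<integral>y. (\<Prod>j\<in>e. (if j = a then p else if j = b then q else r) (y j)) \<partial>PiM e (\<lambda>_. lborel))"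
    by (subst prod_two[OF assms(1-4)]) (rule refl)
  also have "\<dots> = (\<Prod>j\<in>e. integral\<^sup>L lborel (if j = a then p else if j = b then q else r))"
    by (rule product_integral_prod[where f="\<lambda>j. if j = a then p else if j = b then q else r"])
       (use assms in auto)
  also have "\<dots> = integral\<^sup>L lborel p * integral\<^sup>L lborel q * (\<Prod>j\<in>e-{a,b}. integral\<^sup>L lborel r)"
    using prod_two[OF assms(1-4), of "\<lambda>_. integral\<^sup>L lborel p" "\<lambda>_. integral\<^sup>L lborel q"
        "\<lambda>_. integral\<^sup>L lborel r" "\<lambda>x. x"]
    by (smt (verit) prod.cong)
  also have "\<dots> = integral\<^sup>L lborel p * integral\<^sup>L lborel q" using r1 by simp
  finally show ?thesis .
qed



lemma int_two_int:
  fixes p q r :: "'a::euclidean_space \<Rightarrow> real" and e :: "nat set"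
  assumes "finite e" "a \<in> e" "b \<in> e" "a \<noteq> b"
    and ip: "integrable lborel p" and iq: "integrable lborel q" and ir: "integrable lborel r"
  shows "integrable (PiM e (\<lambda>_. lborel)) (\<lambda>y. p (y a) * q (y b) * (\<Prod>j\<in>e-{a,b}. r (y j)))"
proof -
  interpret product_sigma_finite "\<lambda>_::nat. (lborel :: 'a measure)" by (rule sf_lborel)
  have "integrable (PiM e (\<lambda>_. lborel)) (\<lambda>y. (\<Prod>j\<in>e. (if j = a then p else if j = b then q else r) (y j)))"
    by (rule product_integrable_prod[where f="\<lambda>j. if j = a then p else if j = b then q else r"])
       (use assms in auto)
  then show ?thesis by (subst (asm) prod_two[OF assms(1-4)])
qed

lemma int_bdd:
  fixes phi r :: "'b \<Rightarrow> real"
  assumes "integrable M r" "phi \<in> borel_measurable M" "\<And>x. \<bar>phi x\<bar> \<le> B * r x"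
  shows "integrable M phi"
proof (rule Bochner_Integration.integrable_bound[where f="\<lambda>x. B * r x"])
  show "integrable M (\<lambda>x. B * r x)" using assms(1) by simp
  show "AE x in M. norm (phi x) \<le> norm (B * r x)" using assms(3)
    by (auto intro: order_trans[OF _ abs_ge_self])
qed (use assms in auto)

lemma cont_bdd:
  fixes h :: "'a::euclidean_space \<Rightarrow> real"
  assumes "compact X" "continuous_on X h"
  shows "\<exists>B>0. \<forall>x\<in>X. \<bar>h x\<bar> \<le> B"
proof -
  have "bounded (h ` X)" using assms compact_continuous_image compact_imp_bounded by blast
  then show ?thesis unfolding bounded_pos by auto
qed



lemma edge_lemma:
  fixes e :: "nat set" and X :: "'a::euclidean_space set" and rho :: "'a \<Rightarrow> real"
    and f f' :: "'a \<Rightarrow> real"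
  assumes fe: "finite e" and ae: "a \<in> e" and be: "b \<in> e" and ab: "a \<noteq> b"
    and Xcpt: "compact X"
    and rho_meas: "rho \<in> borel_measurable lborel"
    and rho_nonneg: "\<forall>x. 0 \<le> rho x"
    and rho_supp: "\<forall>x. x \<notin> X \<longrightarrow> rho x = 0"
    and rho_prob: "(\<integral>\<^sup>+ x. ennreal (rho x) \<partial>lborel) = 1"
    and c: "0 < c" "\<forall>x\<in>X. c \<le> rho x"
    and fc: "continuous_on X f" and fc': "continuous_on X f'"
    and fm: "(\<integral> x. rho x * f x \<partial>lborel) = 0" and fm': "(\<integral> x. rho x * f' x \<partial>lborel) = 0"
    and H: "\<forall>Z. Z \<in> sets (Z_measure e) \<and> Z \<subseteq> Z_space e X \<and> emeasure (Z_measure e) Z > 0 \<longrightarrow>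
            (\<integral>\<^sup>+ z. ennreal (g_dens rho e u f z) * indicator Z z \<partial>Z_measure e)
              = (\<integral>\<^sup>+ z. ennreal (g_dens rho e u' f' z) * indicator Z z \<partial>Z_measure e)"
  shows "u a - u b = u' a - u' b \<and> emeasure lborel {x\<in>X. f x \<noteq> f' x} = 0"
proof -
  define M where "M = (Z_measure e :: (nat list \<times> (nat \<Rightarrow> 'a)) measure)"
  define P where "P = permutations_of_set e"
  define ft where "ft = (\<lambda>y. indicator X y * f y)"
  define ft' where "ft' = (\<lambda>y. indicator X y * f' y)"
  have Xb: "X \<in> sets borel" using Xcpt by (simp add: compact_imp_closed borel_closed)
  have ftm[measurable]: "ft \<in> borel_measurable borel" unfolding ft_def
    using borel_measurable_continuous_on_indicator[OF Xb fc] by simp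
  have ftm'[measurable]: "ft' \<in> borel_measurable borel" unfolding ft'_def
    using borel_measurable_continuous_on_indicator[OF Xb fc'] by simp
  have rm[measurable]: "rho \<in> borel_measurable borel" using rho_meas by simp
  have spM: "space M = P \<times> (e \<rightarrow>\<^sub>E UNIV)" by (simp add: M_def P_def space_Z)
  have gft: "g_dens rho e v h z = g_dens rho e v (\<lambda>y. indicator X y * h y) z"
    if z: "z \<in> space M" for z v h
  proof -
    from z have fz: "fst z \<in> P" by (auto simp: spM)
    show ?thesis
    proof (cases "\<forall>j\<in>e. snd z j \<in> X")
      case True
      then show ?thesis unfolding g_dens_def using fz
        by (intro arg_cong2[where f="(*)"] refl PL_cong) (auto simp: P_def permutations_of_set_def)
    next
      case False
      then obtain j where "j \<in> e" "snd z j \<notin> X" by auto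
      then have "(\<Prod>j\<in>e. rho (snd z j)) = 0" using fe rho_supp by (intro prod_zero) auto
      then show ?thesis by (simp add: g_dens_def)
    qed
  qed
  have gzero: "g_dens rho e v h z = 0" if z: "z \<in> space M" "z \<notin> Z_space e X" for z v h
  proof -
    obtain p q where zz: "z = (p, q)" by (cases z)
    from z have "snd z \<notin> e \<rightarrow>\<^sub>E X" "snd z \<in> e \<rightarrow>\<^sub>E UNIV"
      unfolding zz spM Z_space_def P_def[symmetric] by simp_all
    then obtain j where "j \<in> e" "snd z j \<notin> X"
      by (auto simp: PiE_iff)
    then have "(\<Prod>j\<in>e. rho (snd z j)) = 0" using fe rho_supp by (intro prod_zero) auto
    then show ?thesis by (simp add: g_dens_def)
  qed
  have gnn: "0 \<le> g_dens rho e v h z" for v h z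
    unfolding g_dens_def using rho_nonneg PL_pos[of v h "fst z" "snd z"]
    by (intro mult_nonneg_nonneg prod_nonneg) auto
  have gm: "(\<lambda>z. ennreal (g_dens rho e v h z)) \<in> borel_measurable M"
    if hc: "continuous_on X h" for v h
  proof -
    have hm: "(\<lambda>y. indicator X y * h y) \<in> borel_measurable borel"
      using borel_measurable_continuous_on_indicator[OF Xb hc] by simp
    have "(\<lambda>z. g_dens rho e v (\<lambda>y. indicator X y * h y) z) \<in> borel_measurable M"
      unfolding M_def by (rule g_meas[OF hm rm fe])
    then have "(\<lambda>z. ennreal (g_dens rho e v (\<lambda>y. indicator X y * h y) z)) \<in> borel_measurable M"
      by (rule measurable_compose[OF _ measurable_ennreal])
    then show ?thesis by (rule measurable_cong[THEN iffD1, rotated]) (simp only: gft[symmetric])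
  qed
  have ZS: "Z_space e X \<in> sets M" unfolding M_def Z_measure_def Z_space_def
    by (intro pair_measureI sets_PiM_I_finite) (auto simp: fe Xb)
  have eqA: "(\<integral>\<^sup>+ z. ennreal (g_dens rho e u f z) * indicator A z \<partial>M)
              = (\<integral>\<^sup>+ z. ennreal (g_dens rho e u' f' z) * indicator A z \<partial>M)" if A: "A \<in> sets M" for A
  proof -
    define A' where "A' = A \<inter> Z_space e X"
    have A': "A' \<in> sets M" using A ZS by (simp add: A'_def)
    have red: "(\<integral>\<^sup>+ z. ennreal (g_dens rho e v h z) * indicator A z \<partial>M)
              = (\<integral>\<^sup>+ z. ennreal (g_dens rho e v h z) * indicator A' z \<partial>M)" for v h
      by (rule nn_integral_cong) (auto simp: A'_def indicator_def gzero)
    show ?thesis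
    proof (cases "emeasure M A' = 0")
      case True
      then have "A' \<in> null_sets M" using A' by auto
      then show ?thesis by (simp add: red nn_integral_null_set)
    next
      case False
      then have "emeasure M A' > 0" by (simp add: zero_less_iff_neq_zero)
      moreover have "A' \<subseteq> Z_space e X" by (auto simp: A'_def)
      ultimately have "(\<integral>\<^sup>+ z. ennreal (g_dens rho e u f z) * indicator A' z \<partial>M)
              = (\<integral>\<^sup>+ z. ennreal (g_dens rho e u' f' z) * indicator A' z \<partial>M)"
        using H A' by (simp add: M_def)
      then show ?thesis by (simp only: red)
    qed
  qed
  interpret PL: product_sigma_finite "\<lambda>_::nat. (lborel :: 'a measure)" by (rule sf_lborel)
  have sfP: "sigma_finite_measure (PiM e (\<lambda>_::nat. (lborel :: 'a measure)))"
    using PL.sigma_finite fe by blast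
  have sfC: "sigma_finite_measure (count_space P)"
    using fe by (intro sigma_finite_measure_count_space_finite) (simp add: P_def)
  interpret PS: pair_sigma_finite "count_space P" "PiM e (\<lambda>_::nat. (lborel :: 'a measure))"
    using sfP sfC by (simp add: pair_sigma_finite_def)
  interpret SM: sigma_finite_measure M
    unfolding M_def Z_measure_def P_def[symmetric]
    by (rule sigma_finite_pair_measure[OF sfC sfP])
  have "AE z in M. ennreal (g_dens rho e u f z) = ennreal (g_dens rho e u' f' z)"
    by (rule SM.density_unique2) (use gm fc fc' eqA in auto)
  then have "AE z in M. g_dens rho e u f z = g_dens rho e u' f' z"
    by eventually_elim (use gnn in simp)
  then have "AE z in count_space P \<Otimes>\<^sub>M PiM e (\<lambda>_. lborel). g_dens rho e u f z = g_dens rho e u' f' z"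
    unfolding M_def Z_measure_def P_def by assumption
  from PS.AE_pair[OF this]
  have AEpi: "\<forall>\<pi>\<in>P. AE y in PiM e (\<lambda>_. lborel). g_dens rho e u f (\<pi>, y) = g_dens rho e u' f' (\<pi>, y)"
    by (simp add: AE_count_space)
  define ys where "ys = sorted_list_of_set (e - {a, b})"
  have ys: "set ys = e - {a,b}" "distinct ys" using fe by (auto simp: ys_def)
  have p1: "ys @ [a, b] \<in> P" and p2: "ys @ [b, a] \<in> P"
    using ys ae be ab by (auto simp: P_def permutations_of_set_def)
  define k where "k = (\<lambda>y. indicator X y * (f y - f' y))"
  define d where "d = (u' a - u' b) - (u a - u b)"
  have AEk: "AE y in PiM e (\<lambda>_. lborel). y \<in> e \<rightarrow>\<^sub>E X \<longrightarrow> k (y a) - k (y b) = d"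
    using AEpi p1 p2
  proof -
    have A1: "AE y in PiM e (\<lambda>_. lborel). g_dens rho e u f (ys @ [a, b], y) = g_dens rho e u' f' (ys @ [a, b], y)"
      using AEpi p1 by blast
    have A2: "AE y in PiM e (\<lambda>_. lborel). g_dens rho e u f (ys @ [b, a], y) = g_dens rho e u' f' (ys @ [b, a], y)"
      using AEpi p2 by blast
    from A1 A2 show ?thesis
    proof eventually_elim
      case (elim y)
      show ?case
      proof
        assume yX: "y \<in> e \<rightarrow>\<^sub>E X"
        have Gp: "(\<Prod>j\<in>e. rho (y j)) > 0"
          using yX c by (intro prod_pos) (auto simp: PiE_iff intro: less_le_trans)
        let ?P1 = "PL_prob u f (ys @ [a, b]) y" and ?P2 = "PL_prob u f (ys @ [b, a]) y"
        let ?Q1 = "PL_prob u' f' (ys @ [a, b]) y" and ?Q2 = "PL_prob u' f' (ys @ [b, a]) y"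
        have e1: "?P1 = ?Q1" using elim(1) Gp by (simp add: g_dens_def)
        have e2: "?P2 = ?Q2" using elim(2) Gp by (simp add: g_dens_def)
        have s1: "?P1 * exp (u b + f (y b)) = ?P2 * exp (u a + f (y a))" by (rule PL_swap)
        have s2: "?Q1 * exp (u' b + f' (y b)) = ?Q2 * exp (u' a + f' (y a))" by (rule PL_swap)
        have P2pos: "?P2 > 0" by (rule PL_pos)
        have "?P2 * (exp (u a + f (y a)) * exp (u' b + f' (y b))) = ?P2 * (exp (u' a + f' (y a)) * exp (u b + f (y b)))"
        proof -
          have "?P2 * (exp (u a + f (y a)) * exp (u' b + f' (y b))) = (?P1 * exp (u b + f (y b))) * exp (u' b + f' (y b))"
            using s1 by (simp add: mult.assoc)
          also have "\<dots> = exp (u b + f (y b)) * (?Q1 * exp (u' b + f' (y b)))"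
            using e1 by (simp add: ac_simps)
          also have "\<dots> = exp (u b + f (y b)) * (?Q2 * exp (u' a + f' (y a)))"
            using s2 by simp
          also have "\<dots> = ?P2 * (exp (u' a + f' (y a)) * exp (u b + f (y b)))"
            using e2 by (simp add: ac_simps)
          finally show ?thesis .
        qed
        then have "exp (u a + f (y a)) * exp (u' b + f' (y b)) = exp (u' a + f' (y a)) * exp (u b + f (y b))"
          using P2pos by simp
        then have "exp (u a + f (y a) + (u' b + f' (y b))) = exp (u' a + f' (y a) + (u b + f (y b)))"
          by (simp add: exp_add)
        then have "u a + f (y a) + (u' b + f' (y b)) = u' a + f' (y a) + (u b + f (y b))" by simp
        moreover have "y a \<in> X" "y b \<in> X" using yX ae be by auto
        ultimately show "k (y a) - k (y b) = d" by (simp add: k_def d_def)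
      qed
    qed
  qed

  have rint: "integrable lborel rho"
    by (rule integrableI_nonneg) (use rho_meas rho_nonneg rho_prob in auto)
  have r1: "integral\<^sup>L lborel rho = 1"
  proof -
    have "ennreal (integral\<^sup>L lborel rho) = 1"
      using nn_integral_eq_integral[OF rint] rho_nonneg rho_prob by simp
    then show ?thesis by simp
  qed
  obtain Bf where Bf: "Bf > 0" "\<forall>x\<in>X. \<bar>f x\<bar> \<le> Bf" using cont_bdd[OF Xcpt fc] by blast
  obtain Bf' where Bf': "Bf' > 0" "\<forall>x\<in>X. \<bar>f' x\<bar> \<le> Bf'" using cont_bdd[OF Xcpt fc'] by blast
  have kft: "k x = ft x - ft' x" for x by (simp add: k_def ft_def ft'_def algebra_simps)
  have km[measurable]: "k \<in> borel_measurable borel" unfolding kft[abs_def] by measurable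
  have rbd: "\<bar>rho x * h x\<bar> \<le> B * rho x" if "\<forall>x. x \<in> X \<longrightarrow> \<bar>h x\<bar> \<le> B" for h :: "'a \<Rightarrow> real" and B x
  proof (cases "x \<in> X")
    case True
    then have "\<bar>h x\<bar> \<le> B" using that by blast
    then have "rho x * \<bar>h x\<bar> \<le> rho x * B" using rho_nonneg by (simp add: mult_left_mono)
    then show ?thesis using rho_nonneg by (simp add: abs_mult mult.commute)
  next
    case False
    then show ?thesis using rho_supp by simp
  qed
  have rft_int: "integrable lborel (\<lambda>x. rho x * ft x)"
    using Bf by (intro int_bdd[OF rint, where B=Bf] rbd) (measurable, auto simp: ft_def)
  have rft_int': "integrable lborel (\<lambda>x. rho x * ft' x)"
    using Bf' by (intro int_bdd[OF rint, where B=Bf'] rbd) (measurable, auto simp: ft'_def)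
  have kb: "\<forall>x. x \<in> X \<longrightarrow> \<bar>k x\<bar> \<le> Bf + Bf'"
  proof (intro allI impI)
    fix x assume x: "x \<in> X"
    then have "\<bar>f x\<bar> \<le> Bf" "\<bar>f' x\<bar> \<le> Bf'" using Bf Bf' by auto
    then show "\<bar>k x\<bar> \<le> Bf + Bf'" using x by (simp add: k_def)
  qed
  have kb2: "\<forall>x. x \<in> X \<longrightarrow> \<bar>(k x)\<^sup>2\<bar> \<le> (Bf + Bf')\<^sup>2"
  proof (intro allI impI)
    fix x assume "x \<in> X"
    then have "\<bar>k x\<bar> \<le> Bf + Bf'" using kb by blast
    then have "\<bar>k x\<bar>\<^sup>2 \<le> (Bf + Bf')\<^sup>2" by (rule power_mono) simp
    then show "\<bar>(k x)\<^sup>2\<bar> \<le> (Bf + Bf')\<^sup>2" by (simp add: power_abs)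
  qed
  have rk_int: "integrable lborel (\<lambda>x. rho x * k x)"
    by (rule int_bdd[OF rint, where B="Bf + Bf'"]) (use rbd[OF kb] in auto)
  have rk2_int: "integrable lborel (\<lambda>x. rho x * (k x)\<^sup>2)"
    by (rule int_bdd[OF rint, where B="(Bf + Bf')\<^sup>2"]) (use rbd[OF kb2] in auto)
  have rf: "(\<integral>x. rho x * ft x \<partial>lborel) = 0"
    using fm by (subst Bochner_Integration.integral_cong[OF refl, where g="\<lambda>x. rho x * f x"])
       (use rho_supp in \<open>auto simp: ft_def indicator_def\<close>)
  have rf': "(\<integral>x. rho x * ft' x \<partial>lborel) = 0"
    using fm' by (subst Bochner_Integration.integral_cong[OF refl, where g="\<lambda>x. rho x * f' x"])
       (use rho_supp in \<open>auto simp: ft'_def indicator_def\<close>)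
  have rk0: "(\<integral>x. rho x * k x \<partial>lborel) = 0"
  proof -
    have "(\<integral>x. rho x * k x \<partial>lborel) = (\<integral>x. rho x * ft x - rho x * ft' x \<partial>lborel)"
      by (simp add: kft right_diff_distrib)
    also have "\<dots> = 0" using rft_int rft_int' rf rf' by simp
    finally show ?thesis .
  qed
  define V where "V = (\<integral>x. rho x * (k x)\<^sup>2 \<partial>lborel)"
  have V0: "V \<ge> 0" unfolding V_def by (rule Bochner_Integration.integral_nonneg) (use rho_nonneg in auto)
  define R where "R = (\<lambda>y::nat \<Rightarrow> 'a. \<Prod>j\<in>e-{a,b}. rho (y j))"
  define T where "T = (\<lambda>p q (y::nat \<Rightarrow> 'a). p (y a) * q (y b) * R y)"
  define rk where "rk = (\<lambda>x. rho x * k x)"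
  define rk2 where "rk2 = (\<lambda>x. rho x * (k x)\<^sup>2)"
  define I where "I = (\<lambda>y. rho (y a) * rho (y b) * R y * (k (y a) - k (y b) - d)\<^sup>2)"
  have Tint: "integrable (PiM e (\<lambda>_. lborel)) (T p q)"
    if "integrable lborel p" "integrable lborel q" for p q
    unfolding T_def R_def by (rule int_two_int[OF fe ae be ab that rint])
  have Tval: "integral\<^sup>L (PiM e (\<lambda>_. lborel)) (T p q) = integral\<^sup>L lborel p * integral\<^sup>L lborel q"
    if "integrable lborel p" "integrable lborel q" for p q
    unfolding T_def R_def by (rule int_two[OF fe ae be ab that rint r1])
  have ints: "integrable lborel rho" "integrable lborel rk" "integrable lborel rk2"
    using rint rk_int rk2_int by (simp_all add: rk_def rk2_def)
  have vals: "integral\<^sup>L lborel rho = 1" "integral\<^sup>L lborel rk = 0" "integral\<^sup>L lborel rk2 = V"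
    using r1 rk0 by (simp_all add: rk_def rk2_def V_def)
  have Iexp: "I = (\<lambda>y. T rk2 rho y + T rho rk2 y + d\<^sup>2 * T rho rho y - 2 * T rk rk y
                    - 2 * d * T rk rho y + 2 * d * T rho rk y)"
    by (rule ext) (simp add: I_def T_def rk_def rk2_def power2_eq_square algebra_simps)
  have "integral\<^sup>L (PiM e (\<lambda>_. lborel)) I = V + V + d\<^sup>2 * 1 - 2 * (0 * 0) - 2 * d * (0 * 1) + 2 * d * (1 * 0)"
    unfolding Iexp
    by (simp add: Tint Tval ints vals del: mult_zero_left mult_zero_right mult_1_left mult_1_right)
  moreover have "integral\<^sup>L (PiM e (\<lambda>_. lborel)) I = 0"
  proof (rule integral_eq_zero_AE)
    show "AE y in PiM e (\<lambda>_. lborel). I y = 0"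
      using AEk AE_space
    proof eventually_elim
      case (elim y)
      show ?case
      proof (cases "y \<in> e \<rightarrow>\<^sub>E X")
        case True then show ?thesis using elim by (simp add: I_def)
      next
        case False
        then obtain j where j: "j \<in> e" "y j \<notin> X" using elim(2) by (auto simp: space_PiM PiE_iff)
        have "I y = (\<Prod>j\<in>e. rho (y j)) * (k (y a) - k (y b) - d)\<^sup>2"
        proof -
          have "(\<Prod>j\<in>e. rho (y j)) = rho (y a) * rho (y b) * R y"
            using prod_two[OF fe ae be ab, of rho rho rho y] unfolding R_def by (simp only: if_cancel)
          then show ?thesis by (simp add: I_def)
        qed
        also have "(\<Prod>j\<in>e. rho (y j)) = 0" using j fe rho_supp by (intro prod_zero) auto
        finally show ?thesis by simp
      qed
    qed
  qed
  ultimately have "V + V + d\<^sup>2 = 0" by simp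
  then have d0: "d = 0" and VV: "V = 0" using V0 by (smt (verit) zero_le_power2 power_eq_0_iff)+
  have "AE x in lborel. rho x * (k x)\<^sup>2 = 0"
    using VV unfolding V_def by (subst (asm) integral_nonneg_eq_0_iff_AE) (use rk2_int rho_nonneg in auto)
  then have AEN: "AE x in lborel. x \<notin> {x\<in>X. f x \<noteq> f' x}"
  proof eventually_elim
    case (elim x)
    show ?case
    proof
      assume x: "x \<in> {x\<in>X. f x \<noteq> f' x}"
      then have "rho x > 0" using c by (auto intro: less_le_trans)
      then have "k x = 0" using elim by simp
      then show False using x by (simp add: k_def)
    qed
  qed
  have Nset: "{x\<in>X. f x \<noteq> f' x} = {x\<in>space borel. k x \<noteq> 0}" by (auto simp: k_def indicator_def)
  have "{x\<in>space borel. k x \<noteq> 0} \<in> sets borel" by measurable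
  then have "{x\<in>X. f x \<noteq> f' x} \<in> sets lborel" using Nset by simp
  then have "{x\<in>X. f x \<noteq> f' x} \<in> null_sets lborel" using AEN AE_iff_null_sets by blast
  then have "emeasure lborel {x\<in>X. f x \<noteq> f' x} = 0" by auto
  moreover have "u a - u b = u' a - u' b" using d0 by (simp add: d_def)
  ultimately show ?thesis by simp
qed



lemma two_elems:
  assumes "2 \<le> card (e::nat set)"
  shows "\<exists>a\<in>e. \<exists>b\<in>e. a \<noteq> b"
proof (rule ccontr)
  assume H: "\<not> ?thesis"
  have "e \<noteq> {}" using assms by auto
  then obtain a where a: "a \<in> e" by auto
  then have "e \<subseteq> {a}" using H by auto
  then have "card e \<le> 1" using card_mono[of "{a}" e] by simp
  then show False using assms by simp
qed

theorem theorem1: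
  fixes n :: nat and E :: "nat set set" and X :: "'a::euclidean_space set"
    and rho :: "'a \<Rightarrow> real" and F :: "('a \<Rightarrow> real) set"
  assumes n2: "2 \<le> n"
    and hyp: "comparison_hypergraph {1..n} E"
    and conn: "hyper_connected {1..n} E"
    and Xcpt: "compact X"
    and rho_meas: "rho \<in> borel_measurable lborel"
    and rho_nonneg: "\<forall>x. 0 \<le> rho x"
    and rho_supp: "\<forall>x. x \<notin> X \<longrightarrow> rho x = 0"
    and rho_prob: "(\<integral>\<^sup>+ x. ennreal (rho x) \<partial>lborel) = 1"
    and rho_bdd: "\<exists>c C. 0 < c \<and> (\<forall>x\<in>X. c \<le> rho x \<and> rho x \<le> C)"
    and F_cont: "\<forall>f\<in>F. continuous_on X f"
    and F_mean: "\<forall>f\<in>F. (\<integral> x. rho x * f x \<partial>lborel) = 0"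
    and u: "u \<in> Ucent n" and u': "u' \<in> Ucent n"
    and f: "f \<in> F" and f': "f' \<in> F"
    and ne: "u \<noteq> u' \<or> emeasure lborel {x\<in>X. f x \<noteq> f' x} > 0"
  shows "\<exists>e\<in>E. \<exists>Z. Z \<in> sets (Z_measure e) \<and> Z \<subseteq> Z_space e X
            \<and> emeasure (Z_measure e) Z > 0
            \<and> (\<integral>\<^sup>+ z. ennreal (g_dens rho e u f z) * indicator Z z \<partial>Z_measure e)
              \<noteq> (\<integral>\<^sup>+ z. ennreal (g_dens rho e u' f' z) * indicator Z z \<partial>Z_measure e)"
proof (rule ccontr)
  assume nex: "\<not> ?thesis"
  obtain c C where c: "0 < c" "\<forall>x\<in>X. c \<le> rho x \<and> rho x \<le> C" using rho_bdd by blast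
  have EL: "u a - u b = u' a - u' b \<and> emeasure lborel {x\<in>X. f x \<noteq> f' x} = 0"
    if e: "e \<in> E" "a \<in> e" "b \<in> e" "a \<noteq> b" for e a b
  proof (rule edge_lemma[where c=c])
    have "2 \<le> card e" using hyp e(1) by (auto simp: comparison_hypergraph_def)
    then show "finite e" by (metis card.infinite not_numeral_le_zero)
    show "\<forall>Z. Z \<in> sets (Z_measure e) \<and> Z \<subseteq> Z_space e X \<and> emeasure (Z_measure e) Z > 0 \<longrightarrow>
            (\<integral>\<^sup>+ z. ennreal (g_dens rho e u f z) * indicator Z z \<partial>Z_measure e)
              = (\<integral>\<^sup>+ z. ennreal (g_dens rho e u' f' z) * indicator Z z \<partial>Z_measure e)"
      using nex e(1) by blast
  qed (use e Xcpt rho_meas rho_nonneg rho_supp rho_prob c F_cont F_mean f f' in auto)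
  have diff: "u a - u b = u' a - u' b" if "(a, b) \<in> hyper_adj E" for a b
  proof (cases "a = b")
    case True then show ?thesis by simp
  next
    case False
    from that obtain e where "e \<in> E" "a \<in> e" "b \<in> e" by (auto simp: hyper_adj_def)
    then show ?thesis using EL False by blast
  qed
  have reach: "u i - u j = u' i - u' j" if "(i, j) \<in> (hyper_adj E)\<^sup>*" for i j
    using that
  proof (induction rule: rtrancl_induct)
    case base then show ?case by simp
  next
    case (step y z)
    then show ?case using diff[OF step(2)] by linarith
  qed
  have "(1::nat, 2) \<in> (hyper_adj E)\<^sup>*" using conn n2 by (auto simp: hyper_connected_def)
  then obtain y where "(y, 2) \<in> hyper_adj E" by (auto elim: rtranclE)
  then obtain e0 where e0: "e0 \<in> E" by (auto simp: hyper_adj_def)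
  then have "2 \<le> card e0" using hyp by (auto simp: comparison_hypergraph_def)
  then obtain a b where "a \<in> e0" "b \<in> e0" "a \<noteq> b" using two_elems by blast
  then have fpart: "emeasure lborel {x\<in>X. f x \<noteq> f' x} = 0" using EL e0 by blast
  have r1: "u 1 - u i = u' 1 - u' i" if "i \<in> {1..n}" for i
    using reach[of 1 i] conn that n2 by (auto simp: hyper_connected_def)
  have "(\<Sum>i\<in>{1..n}. u 1 - u i) = (\<Sum>i\<in>{1..n}. u' 1 - u' i)"
    by (rule sum.cong) (use r1 in auto)
  moreover have "(\<Sum>i\<in>{1..n}. u i) = 0" "(\<Sum>i\<in>{1..n}. u' i) = 0"
    using u u' by (auto simp: Ucent_def)
  ultimately have "real n * u 1 = real n * u' 1" by (simp add: sum_subtractf)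
  then have u1: "u 1 = u' 1" using n2 by simp
  have "u = u'"
  proof
    fix i
    show "u i = u' i"
    proof (cases "i \<in> {1..n}")
      case True then show ?thesis using r1[OF True] u1 by simp
    next
      case False then show ?thesis using u u' by (auto simp: Ucent_def)
    qed
  qed
  then show False using ne fpart by simp
qed


end
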